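(* Let $n\ge1$, $k=\lfloor n/2\rfloor$, and let $T=(t_{ij})_{i,j=1}^n$ be the $n\times n$ matrix over the polynomial ring $\mathbb C[x_1,\dots,x_n]$ with $t_{ii}=0$, $t_{ij}=x_j$ for $i<j$ and $t_{ij}=-x_j$ for $i>j$. Then $$\det(\lambda\,\mathrm{Id}-T)=\lambda^n+\sigma_2\lambda^{n-2}+\sigma_4\lambda^{n-4}+\dots+\sigma_{2k}\lambda^{n-2k},$$ where $\sigma_r=\sum_{i_1<\dots<i_r}x_{i_1}\cdots x_{i_r}$ is the $r$-th elementary symmetric polynomial.
   Context: $\lambda$ is an indeterminate; the determinant is taken in $\mathbb C[x_1,\dots,x_n][\lambda]$. *)

theory Defs
  imports "Jordan_Normal_Form.Char_Poly"
begin

definition Tmat :: "nat \<Rightarrow> (nat \<Rightarrow> 'a::comm_ring_1) \<Rightarrow> 'a mat" where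
  "Tmat n x = mat n n (\<lambda>(i,j). if i < j then x j else if j < i then - x j else 0)"

definition esym :: "nat \<Rightarrow> (nat \<Rightarrow> 'a::comm_ring_1) \<Rightarrow> nat \<Rightarrow> 'a" where
  "esym n x r = (\<Sum>S \<in> {S. S \<subseteq> {0..<n} \<and> card S = r}. \<Prod>i\<in>S. x i)"

end

theory Submission
  imports Defs
begin


lemma esym_0[simp]: "esym m x 0 = 1"
proof -
  have "{S. S \<subseteq> {0..<m} \<and> card S = 0} = {{}}"
    by (auto dest: finite_subset[OF _ finite_atLeastLessThan])
  thus ?thesis unfolding esym_def by simp
qed

lemma esym_big: "r > m \<Longrightarrow> esym m x r = 0"
proof -
  assume "r > m"
  have e: "{S. S \<subseteq> {0..<m} \<and> card S = r} = {}"
  proof (intro equalityI subsetI)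
    fix S assume "S \<in> {S. S \<subseteq> {0..<m} \<and> card S = r}"
    hence "card S \<le> m" "card S = r" using card_mono[OF finite_atLeastLessThan, of S 0 m] by auto
    thus "S \<in> {}" using \<open>r > m\<close> by simp
  qed simp
  show ?thesis unfolding esym_def e by simp
qed

lemma esym_Suc: "esym (Suc m) x (Suc r) = esym m x (Suc r) + x m * esym m x r"
proof -
  let ?A = "{S. S \<subseteq> {0..<Suc m} \<and> card S = Suc r}"
  let ?B = "{S. S \<subseteq> {0..<m} \<and> card S = Suc r}"
  let ?C = "{S. S \<subseteq> {0..<m} \<and> card S = r}"
  have fin: "finite ?A" by (rule finite_subset[of _ "Pow {0..<Suc m}"]) auto
  have A: "?A = ?B \<union> insert m ` ?C"
  proof (intro equalityI subsetI)
    fix S assume S: "S \<in> ?A"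
    show "S \<in> ?B \<union> insert m ` ?C"
    proof (cases "m \<in> S")
      case True
      have "S - {m} \<in> ?C" using S True
        by (auto simp: card_Diff_singleton dest: finite_subset[OF _ finite_atLeastLessThan])
      moreover have "S = insert m (S - {m})" using True by auto
      ultimately show ?thesis by blast
    next
      case False thus ?thesis using S by auto (metis atLeastLessThan_iff less_Suc_eq subsetD)
    qed
  next
    fix S assume "S \<in> ?B \<union> insert m ` ?C"
    thus "S \<in> ?A"
    proof
      assume "S \<in> ?B" thus ?thesis by auto
    next
      assume "S \<in> insert m ` ?C"
      then obtain T where T: "T \<in> ?C" "S = insert m T" by auto
      have "finite T" using T by (auto dest: finite_subset[OF _ finite_atLeastLessThan])
      moreover have "m \<notin> T" using T by auto
      ultimately show ?thesis using T by auto
    qed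
  qed
  have disj: "?B \<inter> insert m ` ?C = {}" by auto
  have inj: "inj_on (insert m) ?C"
  proof (rule inj_onI)
    fix X Y assume X: "X \<in> ?C" and Y: "Y \<in> ?C" and e: "insert m X = insert m Y"
    have "m \<notin> X" "m \<notin> Y" using X Y by auto
    hence "X = insert m X - {m}" "Y = insert m Y - {m}" by auto
    thus "X = Y" using e by simp
  qed
  have finB: "finite ?B" by (rule finite_subset[of _ "Pow {0..<m}"]) auto
  have finC: "finite ?C" by (rule finite_subset[of _ "Pow {0..<m}"]) auto
  have "esym (Suc m) x (Suc r) = (\<Sum>S\<in>?B. \<Prod>i\<in>S. x i) + (\<Sum>S\<in>insert m ` ?C. \<Prod>i\<in>S. x i)"
    unfolding esym_def A by (rule sum.union_disjoint) (use finB finC disj in auto)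
  also have "(\<Sum>S\<in>insert m ` ?C. \<Prod>i\<in>S. x i) = (\<Sum>S\<in>?C. \<Prod>i\<in>insert m S. x i)"
    by (rule sum.reindex[OF inj, unfolded comp_def])
  also have "\<dots> = (\<Sum>S\<in>?C. x m * (\<Prod>i\<in>S. x i))"
  proof (rule sum.cong[OF refl])
    fix S assume S: "S \<in> ?C"
    hence "finite S" "m \<notin> S" by (auto intro: finite_subset)
    thus "(\<Prod>i\<in>insert m S. x i) = x m * (\<Prod>i\<in>S. x i)" by simp
  qed
  finally show ?thesis unfolding esym_def by (simp add: sum_distrib_left)
qed

definition SS :: "nat \<Rightarrow> (nat \<Rightarrow> 'a::comm_ring_1) \<Rightarrow> (nat \<Rightarrow> 'a) \<Rightarrow> 'a poly" where
  "SS m x f = (\<Sum>r\<le>m. monom (f r * esym m x r) (m - r))"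

lemma pCons0_sum: "pCons 0 (sum g A) = (\<Sum>i\<in>A. pCons 0 (g i))"
proof (induct A rule: infinite_finite_induct)
  case (insert a F)
  have "pCons 0 (g a + sum g F) = pCons 0 (g a) + pCons 0 (sum g F)"
    using add_pCons[of 0 "g a" 0 "sum g F"] by simp
  thus ?case using insert by simp
qed auto

lemma SS_Suc: fixes x f :: "nat \<Rightarrow> 'a::comm_ring_1" shows "SS (Suc m) x f = pCons 0 (SS m x f) + Polynomial.smult (x m) (SS m x (\<lambda>r. f (Suc r)))"
proof -
  have 1: "SS (Suc m) x f = monom (f 0) (Suc m) + (\<Sum>s\<le>m. monom (f (Suc s) * esym (Suc m) x (Suc s)) (m - s))"
    unfolding SS_def by (subst sum.atMost_Suc_shift) simp
  have 2: "(\<Sum>s\<le>m. monom (f (Suc s) * esym (Suc m) x (Suc s)) (m - s))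
     = (\<Sum>s\<le>m. monom (f (Suc s) * esym m x (Suc s)) (m - s)) + Polynomial.smult (x m) (SS m x (\<lambda>r. f (Suc r)))"
    unfolding SS_def esym_Suc smult_sum2 sum.distrib[symmetric]
    by (rule sum.cong[OF refl]) (simp add: add_monom smult_monom algebra_simps)
  have 3: "monom (f 0) (Suc m) + (\<Sum>s\<le>m. monom (f (Suc s) * esym m x (Suc s)) (m - s))
      = (\<Sum>r\<le>Suc m. monom (f r * esym m x r) (Suc m - r))"
    by (subst sum.atMost_Suc_shift) simp
  have 4: "(\<Sum>r\<le>Suc m. monom (f r * esym m x r) (Suc m - r)) = (\<Sum>r\<le>m. monom (f r * esym m x r) (Suc m - r))"
    by (simp add: esym_big)
  have 5: "(\<Sum>r\<le>m. monom (f r * esym m x r) (Suc m - r)) = pCons 0 (SS m x f)"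
    unfolding SS_def pCons0_sum
    by (rule sum.cong) (auto simp: Suc_diff_le monom_Suc)
  show ?thesis unfolding 1 2 add.assoc[symmetric] 3 4 5 ..
qed

lemma SS_0: "SS 0 x f = [:f 0:]"
  unfolding SS_def by (simp add: monom_0)

definition ev :: "nat \<Rightarrow> 'a::comm_ring_1" where "ev r = (if even r then 1 else 0)"
definition od :: "nat \<Rightarrow> 'a::comm_ring_1" where "od r = (if odd r then 1 else 0)"

lemma ev_Suc: "(\<lambda>r. ev (Suc r)) = od" and od_Suc: "(\<lambda>r. od (Suc r)) = ev"
  by (auto simp: ev_def od_def fun_eq_iff)

lemma SS_ev_Suc: "SS (Suc m) x ev = pCons 0 (SS m x ev) + Polynomial.smult (x m) (SS m x od)"
  using SS_Suc[of m x ev] by (simp add: ev_Suc)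
lemma SS_od_Suc: "SS (Suc m) x od = pCons 0 (SS m x od) + Polynomial.smult (x m) (SS m x ev)"
  using SS_Suc[of m x od] by (simp add: od_Suc)

lemma prod_SS: "(\<Prod>i<m. [:- x i, 1:]) = SS m x ev - SS m x od"
proof (induction m)
  case 0 thus ?case by (simp add: SS_0 ev_def od_def)
next
  case (Suc m)
  have e: "[:- x m, 1:] = pCons 0 1 - [:x m:]" by simp
  show ?case
    unfolding prod.lessThan_Suc Suc SS_ev_Suc SS_od_Suc e
    by (simp add: algebra_simps)
qed

lemma SS_ev_final: "SS n x ev = (\<Sum>j = 0..n div 2. monom (esym n x (2 * j)) (n - 2 * j))"
proof -
  have "SS n x ev = (\<Sum>r\<le>n. if even r then monom (esym n x r) (n - r) else 0)"
    unfolding SS_def ev_def by (rule sum.cong) auto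
  also have "\<dots> = (\<Sum>r\<in>{r\<in>{..n}. even r}. monom (esym n x r) (n - r))"
    by (rule sum.inter_filter[symmetric]) simp
  also have "{r\<in>{..n}. even r} = (\<lambda>j. 2 * j) ` {0..n div 2}"
    by (auto simp: image_iff elim!: evenE)
  also have "(\<Sum>r\<in>(\<lambda>j. 2 * j) ` {0..n div 2}. monom (esym n x r) (n - r)) = 
      (\<Sum>j = 0..n div 2. monom (esym n x (2 * j)) (n - 2 * j))"
    by (subst sum.reindex) (auto simp: inj_on_def)
  finally show ?thesis .
qed



lemma Tmat_carrier: "Tmat n x \<in> carrier_mat n n" unfolding Tmat_def by simp

lemma cpm_carrier: "char_poly_matrix (Tmat n x) \<in> carrier_mat n n"
  using Tmat_carrier by (rule char_poly_matrix_closed)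

lemma cpm_entry: "i < n \<Longrightarrow> j < n \<Longrightarrow> char_poly_matrix (Tmat n x) $$ (i,j) =
   (if i = j then [:0,1:] else if i < j then [:- x j:] else [:x j:])"
  unfolding char_poly_matrix_def Tmat_def by auto

lemma det_rec:
  fixes x :: "nat \<Rightarrow> 'a::comm_ring_1"
  shows "char_poly (Tmat (Suc m) x) =
    [:- x m:] * ((\<Prod>i<m. [:- x i, 1:]) - char_poly (Tmat m x)) + [:0,1:] * char_poly (Tmat m x)"
proof -
  define N where "N = Suc m"
  define M where "M = char_poly_matrix (Tmat N x)"
  have MC: "M \<in> carrier_mat N N" unfolding M_def by (rule cpm_carrier)
  have Me: "\<And>i j. i < N \<Longrightarrow> j < N \<Longrightarrow> M $$ (i,j) =
     (if i = j then [:0,1:] else if i < j then [:- x j:] else [:x j:])"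
    unfolding M_def by (rule cpm_entry)
  have mN: "m < N" unfolding N_def by simp
  have cofmm: "cofactor M m m = char_poly (Tmat m x)"
  proof -
    have "mat_delete M m m = char_poly_matrix (Tmat m x)"
    proof (rule eq_matI)
      show "dim_row (mat_delete M m m) = dim_row (char_poly_matrix (Tmat m x))"
        using MC cpm_carrier[of m x] unfolding N_def by simp
      show "dim_col (mat_delete M m m) = dim_col (char_poly_matrix (Tmat m x))"
        using MC cpm_carrier[of m x] unfolding N_def by simp
      fix i j assume "i < dim_row (char_poly_matrix (Tmat m x))" "j < dim_col (char_poly_matrix (Tmat m x))"
      hence ij: "i < m" "j < m" using cpm_carrier[of m x] by auto
      show "mat_delete M m m $$ (i, j) = char_poly_matrix (Tmat m x) $$ (i, j)"
        unfolding mat_delete_def using ij MC Me[of i j] cpm_entry[OF ij, of x] unfolding N_def by auto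
    qed
    thus ?thesis unfolding cofactor_def char_poly_def by simp
  qed
  define M3 where "M3 = mat N N (\<lambda>(i,j). if j = m then 1 else M $$ (i,j))"
  have M3C: "M3 \<in> carrier_mat N N" unfolding M3_def by simp
  have cof3: "cofactor M3 i m = cofactor M i m" for i
  proof -
    have "mat_delete M3 i m = mat_delete M i m"
      by (rule eq_matI) (use MC in \<open>auto simp: mat_delete_def M3_def N_def\<close>)
    thus ?thesis unfolding cofactor_def by simp
  qed
  have LM: "det M = (\<Sum>i<N. M $$ (i,m) * cofactor M i m)"
    by (rule laplace_expansion_column[OF MC mN])
  also have "\<dots> = (\<Sum>i<m. [:- x m:] * cofactor M i m) + [:0,1:] * cofactor M m m"
    unfolding N_def by (simp add: Me[unfolded N_def])
  finally have LM': "det M = [:- x m:] * (\<Sum>i<m. cofactor M i m) + [:0,1:] * cofactor M m m"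
    by (simp add: sum_distrib_left)
  have "det M3 = (\<Sum>i<N. M3 $$ (i,m) * cofactor M3 i m)"
    by (rule laplace_expansion_column[OF M3C mN])
  also have "\<dots> = (\<Sum>i<m. cofactor M i m) + cofactor M m m"
    unfolding N_def cof3 by (simp add: M3_def N_def)
  finally have L3: "det M3 = (\<Sum>i<m. cofactor M i m) + cofactor M m m" .
  define E where "E = mat N N (\<lambda>(i,j). if i = j then 1 else if j = m then -1 else (0::'a poly))"
  have EC: "E \<in> carrier_mat N N" unfolding E_def by simp
  have "upper_triangular E" unfolding upper_triangular_def E_def N_def by auto
  hence detE: "det E = 1"
    using det_upper_triangular[OF _ EC] unfolding prod_list_diag_prod by (simp add: E_def)
  define P where "P = E * M3"
  have PC: "P \<in> carrier_mat N N" unfolding P_def using EC M3C by simp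
  have detP: "det P = det M3" unfolding P_def det_mult[OF EC M3C] detE by simp
  have Pe: "P $$ (i,j) = M3 $$ (i,j) - (if i \<noteq> m then M3 $$ (m,j) else 0)" if ij: "i < N" "j < N" for i j
  proof -
    have "P $$ (i,j) = (\<Sum>k\<in>{0..<N}. E $$ (i,k) * M3 $$ (k,j))"
      unfolding P_def using ij EC M3C by (simp add: scalar_prod_def)
    also have "\<dots> = (\<Sum>k\<in>{0..<N}. (if k = i then M3 $$ (k,j) else 0) +
        (if k = m then (if i \<noteq> m then - M3 $$ (k,j) else 0) else 0))"
      by (rule sum.cong[OF refl]) (use ij in \<open>auto simp: E_def\<close>)
    also have "\<dots> = M3 $$ (i,j) - (if i \<noteq> m then M3 $$ (m,j) else 0)"
      unfolding sum.distrib using ij mN by (simp add: sum.delta)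
    finally show ?thesis .
  qed
  define Q where "Q = mat m m (\<lambda>(i,j). if i = j then [:- x i, 1:] else if i < j then [:- x j:] - [:x j:] else (0::'a poly))"
  have QC: "Q \<in> carrier_mat m m" unfolding Q_def by simp
  have delP: "mat_delete P m m = Q"
  proof (rule eq_matI)
    show "dim_row (mat_delete P m m) = dim_row Q" "dim_col (mat_delete P m m) = dim_col Q"
      using PC QC unfolding N_def by auto
    fix i j assume "i < dim_row Q" "j < dim_col Q"
    hence ij: "i < m" "j < m" using QC by auto
    hence "mat_delete P m m $$ (i, j) = P $$ (i,j)" unfolding mat_delete_def using PC by (simp add: N_def)
    also have "\<dots> = M $$ (i,j) - M $$ (m,j)" using ij Pe[of i j] unfolding M3_def N_def by simp
    also have "\<dots> = Q $$ (i,j)" using ij Me[of i j] Me[of m j] unfolding N_def Q_def by auto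
    finally show "mat_delete P m m $$ (i, j) = Q $$ (i,j)" .
  qed
  have "upper_triangular Q" unfolding upper_triangular_def Q_def by auto
  hence detQ: "det Q = (\<Prod>i<m. [:- x i, 1:])"
    using det_upper_triangular[OF _ QC] unfolding prod_list_diag_prod by (simp add: Q_def atLeast0LessThan)
  have "det P = (\<Sum>i<N. P $$ (i,m) * cofactor P i m)"
    by (rule laplace_expansion_column[OF PC mN])
  also have "\<dots> = cofactor P m m"
    unfolding N_def using Pe mN by (simp add: M3_def N_def)
  also have "\<dots> = det Q" unfolding cofactor_def delP by simp
  finally have D3: "det M3 = (\<Prod>i<m. [:- x i, 1:])" using detP detQ by simp
  have "char_poly (Tmat (Suc m) x) = det M" unfolding char_poly_def M_def N_def ..
  also have "\<dots> = [:- x m:] * (det M3 - cofactor M m m) + [:0,1:] * cofactor M m m"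
    unfolding LM' L3 by simp
  finally show ?thesis unfolding D3 cofmm .
qed



lemma cp_SS: fixes x :: "nat \<Rightarrow> 'a::comm_ring_1" shows "char_poly (Tmat m x) = SS m x ev"
proof (induction m)
  case 0
  have "char_poly_matrix (Tmat 0 x) \<in> carrier_mat 0 0" by (rule cpm_carrier)
  hence "char_poly (Tmat 0 x) = 1" unfolding char_poly_def by simp
  thus ?case by (simp add: SS_0 ev_def one_pCons)
next
  case (Suc m)
  show ?case unfolding det_rec Suc prod_SS SS_ev_Suc
    by (simp add: algebra_simps)
qed

theorem lemma5p5:
  fixes n :: nat and x :: "nat \<Rightarrow> 'a::comm_ring_1"
  assumes "n \<ge> 1"
  shows "char_poly (Tmat n x) =
    (\<Sum>j = 0..n div 2. monom (esym n x (2 * j)) (n - 2 * j))"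
  unfolding cp_SS SS_ev_final ..

end
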